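(* Assume (H0), (H1), (H2) with $\partial\Omega$ unbounded, fix $x_0\in\partial\Omega$, and let $f\in L^{p'}(\partial\Omega,\nu)\cap L^{p'}(\partial\Omega,\nu_J)$ with $\int_{\partial\Omega}f\,d\nu=0$. For $k\in\mathbb N$ set $f_k=f\chi_{B_k}-\frac{1}{\nu(B_0)}\Big[\int_{B_k}f\,d\nu\Big]\chi_{B_0}$ (on $\partial\Omega$). Then for every $h\in HB^\theta_{p,p}(\partial\Omega)$, $\sup_{k\in\mathbb N}\big|\int_{\partial\Omega}f_k\,h\,d\nu\big|<\infty$.
   Context: Setting. Fix $1<p<\infty$, $p'=p/(p-1)$. $(X,d,\mu)$ complete metric measure space, $\Omega\subset X$ a domain, $\partial\Omega=\overline\Omega\setminus\Omega$, $d_\Omega(x)=d(x,\partial\Omega)$. Standing hypotheses: (H0) $\Omega$ is uniform: there is $C_U\ge1$ such that any $x,y\in\Omega$ are joined by a rectifiable curve $\gamma$ in $\Omega$ with $\ell(\gamma)\le C_Ud(x,y)$ and $\min\{\ell(\gamma_{x,z}),\ell(\gamma_{z,y})\}\le C_Ud_\Omega(z)$ for all $z$ on $\gamma$. (H1) $\mu|_{\overline\Omega}$ is doubling and $(\overline\Omega,d,\mu)$ supports a $p$-Poincaré inequality. (H2) $\partial\Omega$ is complete, uniformly perfect, doubling, with a Radon measure $\nu$ and constants $C\ge1$, $0<\Theta<p$ such that $C^{-1}\mu(B(x,r)\cap\Omega)r^{-\Theta}\le\nu(B(x,r))\le C\mu(B(x,r)\cap\Omega)r^{-\Theta}$ for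 $x\in\partial\Omega$, $0<r<2\operatorname{diam}\partial\Omega$. $\theta=1-\Theta/p$. $B_0=\{x\in\overline\Omega:d(x,x_0)<1\}$, $B_k=\{x\in\overline\Omega:d(x,x_0)<2^k\}$. $J(x,x_0)=d(x,x_0)^{p'\theta}\nu(B(x_0,d(x_0,x)))^{p'/p}$, $d\nu_J=J(\cdot,x_0)d\nu$. $HB^\theta_{p,p}(\partial\Omega)$: measurable $h$ on $\partial\Omega$ with $\iint\frac{|h(x)-h(y)|^p}{d(x,y)^{\theta p}\nu(B(x,d(x,y)))}d\nu(y)d\nu(x)<\infty$. *)

theory Defs
  imports "HOL-Analysis.Analysis"
begin

definition curve_length :: "(real \<Rightarrow> 'a::metric_space) \<Rightarrow> real \<Rightarrow> real \<Rightarrow> ereal" where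
  "curve_length \<gamma> a b =
     (SUP ts \<in> {ts::real list. ts \<noteq> [] \<and> sorted ts \<and> hd ts = a \<and> last ts = b \<and> set ts \<subseteq> {a..b}}.
        ereal (\<Sum>i<length ts - 1. dist (\<gamma> (ts ! i)) (\<gamma> (ts ! Suc i))))"

definition arclength_curve_in :: "'a::metric_space set \<Rightarrow> (real \<Rightarrow> 'a) \<Rightarrow> real \<Rightarrow> bool" where
  "arclength_curve_in S \<gamma> L \<longleftrightarrow>
     0 \<le> L \<and> continuous_on {0..L} \<gamma> \<and> \<gamma> ` {0..L} \<subseteq> S \<and>
     (\<forall>s t. 0 \<le> s \<and> s \<le> t \<and> t \<le> L \<longrightarrow> curve_length \<gamma> s t = ereal (t - s))"

definition domain :: "'a::metric_space set \<Rightarrow> bool" where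
  "domain \<Omega> \<longleftrightarrow> open \<Omega> \<and> connected \<Omega> \<and> \<Omega> \<noteq> {}"

definition bdry :: "'a::metric_space set \<Rightarrow> 'a set" where
  "bdry \<Omega> = closure \<Omega> - \<Omega>"

text \<open>(H0): uniform domain. A point z on gamma is gamma(t); the sub-arcs gamma_{x,z}, gamma_{z,y}
  have lengths t and L - t because gamma is parametrised by arc length.\<close>
definition uniform_domain :: "'a::metric_space set \<Rightarrow> bool" where
  "uniform_domain \<Omega> \<longleftrightarrow> domain \<Omega> \<and>
     (\<exists>CU\<ge>1. \<forall>x\<in>\<Omega>. \<forall>y\<in>\<Omega>. \<exists>\<gamma> L. arclength_curve_in \<Omega> \<gamma> L \<and> \<gamma> 0 = x \<and> \<gamma> L = y \<and>
        L \<le> CU * dist x y \<and>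
        (\<forall>t\<in>{0..L}. min t (L - t) \<le> CU * infdist (\<gamma> t) (bdry \<Omega>)))"

definition epowr :: "ennreal \<Rightarrow> real \<Rightarrow> ennreal" where
  "epowr a q = (if a = \<infinity> then \<infinity> else ennreal (enn2real a powr q))"

definition doubling_on :: "'a::metric_space measure \<Rightarrow> 'a set \<Rightarrow> bool" where
  "doubling_on \<mu> S \<longleftrightarrow>
     (\<exists>C. \<forall>x\<in>S. \<forall>r>0. 0 < emeasure \<mu> (ball x r \<inter> S) \<and> emeasure \<mu> (ball x r \<inter> S) < \<infinity> \<and>
          emeasure \<mu> (ball x (2*r) \<inter> S) \<le> ennreal C * emeasure \<mu> (ball x r \<inter> S))"

definition upper_gradient_in :: "'a::metric_space set \<Rightarrow> ('a \<Rightarrow> real) \<Rightarrow> ('a \<Rightarrow> ennreal) \<Rightarrow> bool" where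
  "upper_gradient_in S u g \<longleftrightarrow> g \<in> borel_measurable borel \<and>
     (\<forall>\<gamma> L. arclength_curve_in S \<gamma> L \<longrightarrow>
        ennreal \<bar>u (\<gamma> 0) - u (\<gamma> L)\<bar> \<le> (\<integral>\<^sup>+ t. g (\<gamma> t) * indicator {0..L} t \<partial>lborel))"

definition poincare_on :: "real \<Rightarrow> 'a::metric_space measure \<Rightarrow> 'a set \<Rightarrow> bool" where
  "poincare_on p \<mu> S \<longleftrightarrow>
     (\<exists>C>0. \<exists>lam\<ge>1. \<forall>u g x r.
        u \<in> borel_measurable \<mu> \<and>
        (\<forall>z\<in>S. \<forall>s>0. set_integrable \<mu> (ball z s \<inter> S) u) \<and>
        upper_gradient_in S u g \<and> x \<in> S \<and> r > 0 \<and>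
        (\<integral>\<^sup>+ y. epowr (g y) p * indicator (ball x (lam*r) \<inter> S) y \<partial>\<mu>) < \<infinity> \<longrightarrow>
        (let B = ball x r \<inter> S; uB = (\<integral>y\<in>B. u y \<partial>\<mu>) / measure \<mu> B in
           (\<integral>y\<in>B. \<bar>u y - uB\<bar> \<partial>\<mu>) / measure \<mu> B
             \<le> C * r * ((enn2real (\<integral>\<^sup>+ y. epowr (g y) p * indicator (ball x (lam*r) \<inter> S) y \<partial>\<mu>))
                          / measure \<mu> (ball x (lam*r) \<inter> S)) powr (1/p)))"

definition uniformly_perfect :: "'a::metric_space set \<Rightarrow> bool" where
  "uniformly_perfect E \<longleftrightarrow>
     (\<exists>C\<ge>1. \<forall>x\<in>E. \<forall>r>0. E - ball x r \<noteq> {} \<longrightarrow> (E \<inter> ball x r) - ball x (r / C) \<noteq> {})"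

definition metric_doubling :: "'a::metric_space set \<Rightarrow> bool" where
  "metric_doubling E \<longleftrightarrow>
     (\<exists>N::nat. \<forall>x\<in>E. \<forall>r>0. \<exists>F. finite F \<and> card F \<le> N \<and> F \<subseteq> E \<and>
        ball x r \<inter> E \<subseteq> (\<Union>y\<in>F. ball y (r/2)))"

definition standing_hyps ::
  "real \<Rightarrow> 'a::metric_space measure \<Rightarrow> 'a set \<Rightarrow> 'a measure \<Rightarrow> real \<Rightarrow> bool" where
  "standing_hyps p \<mu> \<Omega> \<nu> \<Theta> \<longleftrightarrow>
     1 < p \<and>
     complete (UNIV :: 'a set) \<and> sets \<mu> = sets borel \<and>
     \<comment> \<open>(H0)\<close>
     uniform_domain \<Omega> \<and>
     \<comment> \<open>(H1)\<close>
     doubling_on \<mu> (closure \<Omega>) \<and> poincare_on p \<mu> (closure \<Omega>) \<and>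
     \<comment> \<open>(H2)\<close>
     complete (bdry \<Omega>) \<and> uniformly_perfect (bdry \<Omega>) \<and> metric_doubling (bdry \<Omega>) \<and>
     sets \<nu> = sets borel \<and> emeasure \<nu> (UNIV - bdry \<Omega>) = 0 \<and>
     (\<forall>x r. r > 0 \<longrightarrow> emeasure \<nu> (ball x r) < \<infinity>) \<and>
     0 < \<Theta> \<and> \<Theta> < p \<and>
     (\<exists>C\<ge>1. \<forall>x\<in>bdry \<Omega>. \<forall>r. 0 < r \<and> (bounded (bdry \<Omega>) \<longrightarrow> r < 2 * diameter (bdry \<Omega>)) \<longrightarrow>
        ennreal (1/C) * emeasure \<mu> (ball x r \<inter> \<Omega>) * ennreal (r powr (-\<Theta>)) \<le> emeasure \<nu> (ball x r) \<and>
        emeasure \<nu> (ball x r) \<le> ennreal C * emeasure \<mu> (ball x r \<inter> \<Omega>) * ennreal (r powr (-\<Theta>)))"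

definition conj_exp :: "real \<Rightarrow> real" where
  "conj_exp p = p / (p - 1)"

definition theta_of :: "real \<Rightarrow> real \<Rightarrow> real" where
  "theta_of p \<Theta> = 1 - \<Theta> / p"

definition Bk :: "'a::metric_space set \<Rightarrow> 'a \<Rightarrow> nat \<Rightarrow> 'a set" where
  "Bk \<Omega> x0 k = {x \<in> closure \<Omega>. dist x x0 < 2 ^ k}"

definition Jweight :: "real \<Rightarrow> real \<Rightarrow> 'a::metric_space measure \<Rightarrow> 'a \<Rightarrow> 'a \<Rightarrow> real" where
  "Jweight p \<Theta> \<nu> x0 x =
     dist x x0 powr (conj_exp p * theta_of p \<Theta>) *
     measure \<nu> (ball x0 (dist x0 x)) powr (conj_exp p / p)"

definition HB :: "real \<Rightarrow> real \<Rightarrow> 'a::metric_space measure \<Rightarrow> ('a \<Rightarrow> real) set" where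
  "HB p \<theta> \<nu> = {h. h \<in> borel_measurable \<nu> \<and>
     (\<integral>\<^sup>+ x. \<integral>\<^sup>+ y. ennreal (\<bar>h x - h y\<bar> powr p /
         (dist x y powr (\<theta> * p) * measure \<nu> (ball x (dist x y)))) \<partial>\<nu> \<partial>\<nu>) < \<infinity>}"

definition fk :: "'a::metric_space measure \<Rightarrow> 'a set \<Rightarrow> 'a \<Rightarrow> ('a \<Rightarrow> real) \<Rightarrow> nat \<Rightarrow> 'a \<Rightarrow> real" where
  "fk \<nu> \<Omega> x0 f k x =
     f x * indicator (Bk \<Omega> x0 k) x
     - (1 / measure \<nu> (Bk \<Omega> x0 0)) * (\<integral>y\<in>Bk \<Omega> x0 k. f y \<partial>\<nu>) * indicator (Bk \<Omega> x0 0) x"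

end

theory Submission
  imports Defs
begin


lemma arc_dist:
  assumes "arclength_curve_in S \<gamma> L" "0 \<le> s" "s \<le> t" "t \<le> L"
  shows "dist (\<gamma> s) (\<gamma> t) \<le> t - s"
proof -
  have cl: "curve_length \<gamma> s t = ereal (t - s)" using assms unfolding arclength_curve_in_def by auto
  let ?ts = "[s,t]"
  have mem: "?ts \<in> {ts::real list. ts \<noteq> [] \<and> sorted ts \<and> hd ts = s \<and> last ts = t \<and> set ts \<subseteq> {s..t}}"
    using assms by auto
  have "ereal (\<Sum>i<length ?ts - 1. dist (\<gamma> (?ts ! i)) (\<gamma> (?ts ! Suc i))) \<le> curve_length \<gamma> s t"
    unfolding curve_length_def by (rule SUP_upper[OF mem])
  then show ?thesis using cl by simp
qed

lemma weighted_young: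
  fixes p a b l :: real
  assumes p: "p > 1" and a: "a \<ge> 0" and b: "b \<ge> 0" and l: "l > 0"
  shows "a * b \<le> a powr conj_exp p * l + b powr p / l powr (p - 1)"
proof -
  define q where "q = conj_exp p"
  have q1: "q > 1" using p by (simp add: q_def conj_exp_def field_simps)
  have pq: "1/q + 1/p = 1" using p by (simp add: q_def conj_exp_def field_simps)
  have pq2: "p / q = p - 1" using p by (simp add: q_def conj_exp_def field_simps)
  define a' where "a' = a * l powr (1/q)"
  define b' where "b' = b * l powr (-(1/q))"
  have "a' * b' = a * b" using l by (simp add: a'_def b'_def powr_minus field_simps)
  moreover have "a' * b' \<le> a' powr q / q + b' powr p / p"
    by (rule Youngs_inequality) (use q1 p pq a b l in \<open>auto simp: a'_def b'_def\<close>)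
  moreover have "a' powr q = a powr q * l" using a l q1
    by (simp add: a'_def powr_mult powr_powr)
  moreover have "b' powr p = b powr p / l powr (p - 1)" using b l p
  proof -
    have "b' = b / l powr (1/q)" using l by (simp add: b'_def powr_minus divide_inverse)
    then have "b' powr p = b powr p / (l powr (1/q)) powr p" using b l by (simp add: powr_divide)
    also have "(l powr (1/q)) powr p = l powr (p - 1)" using pq2 by (simp add: powr_powr)
    finally show ?thesis .
  qed
  moreover have "a powr q * l / q \<le> a powr q * l" using q1 a l
    by (simp add: divide_le_eq mult_le_cancel_left1 mult_nonneg_nonneg not_less)
  moreover have "b powr p / l powr (p - 1) / p \<le> b powr p / l powr (p - 1)" using p b l
    by (simp add: divide_le_eq mult_le_cancel_left1)
  ultimately show ?thesis unfolding q_def by (metis (no_types, lifting) add_mono order_trans)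
qed



lemma exists_dist:
  fixes \<Omega> :: "'a::metric_space set"
  assumes conn: "connected \<Omega>" and unb: "\<not> bounded \<Omega>" and a: "a \<in> \<Omega>" and s: "0 \<le> s"
  shows "\<exists>b\<in>\<Omega>. dist a b = s"
proof -
  have c: "connected (dist a ` \<Omega>)"
    by (rule connected_continuous_image[OF _ conn]) (intro continuous_intros)
  obtain b where b: "b \<in> \<Omega>" "dist a b > s"
    using unb unfolding bounded_any_center[of _ a] by (meson not_le)
  have "0 \<in> dist a ` \<Omega>" using a by force
  moreover have "dist a b \<in> dist a ` \<Omega>" using b by auto
  ultimately have "s \<in> dist a ` \<Omega>"
    using c s b(2) unfolding is_interval_connected_1[symmetric] is_interval_1
    by (metis less_eq_real_def)
  then show ?thesis by force
qed

lemma corkscrew: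
  fixes \<Omega> :: "'a::metric_space set"
  assumes ud: "uniform_domain \<Omega>" and unb: "\<not> bounded (bdry \<Omega>)"
  shows "\<exists>K\<ge>1. \<forall>x\<in>bdry \<Omega>. \<forall>r>0. \<exists>z\<in>\<Omega>. ball z (r/K) \<subseteq> ball x r \<and> ball z (r/K) \<inter> closure \<Omega> \<subseteq> \<Omega>"
proof -
  obtain CU where CU: "CU \<ge> 1" and U: "\<forall>x\<in>\<Omega>. \<forall>y\<in>\<Omega>. \<exists>\<gamma> L. arclength_curve_in \<Omega> \<gamma> L \<and> \<gamma> 0 = x \<and> \<gamma> L = y \<and>
        L \<le> CU * dist x y \<and>
        (\<forall>t\<in>{0..L}. min t (L - t) \<le> CU * infdist (\<gamma> t) (bdry \<Omega>))"
    using ud unfolding uniform_domain_def by blast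
  have conn: "connected \<Omega>" and op: "open \<Omega>" using ud unfolding uniform_domain_def domain_def by auto
  have unbO: "\<not> bounded \<Omega>"
    using unb bounded_closure unfolding bdry_def by (metis Diff_subset bounded_subset)
  define K where "K = 2 * CU * (2 + CU)"
  have K1: "K \<ge> 1" using CU unfolding K_def
    by (smt (verit, ccfv_threshold) mult_le_cancel_left1 mult_nonneg_nonneg)
  have "\<forall>x\<in>bdry \<Omega>. \<forall>r>0. \<exists>z\<in>\<Omega>. ball z (r/K) \<subseteq> ball x r \<and> ball z (r/K) \<inter> closure \<Omega> \<subseteq> \<Omega>"
  proof (intro ballI allI impI)
    fix x r assume x: "x \<in> bdry \<Omega>" and r: "(r::real) > 0"
    define s where "s = r / (2 + CU)"
    have s: "s > 0" using r CU by (simp add: s_def)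
    have "x \<in> closure \<Omega>" using x unfolding bdry_def by auto
    then obtain a where a: "a \<in> \<Omega>" "dist a x < s" using s closure_approachable by blast
    obtain b where b: "b \<in> \<Omega>" "dist a b = s" using exists_dist[OF conn unbO a(1), of s] s by auto
    obtain \<gamma> L where g: "arclength_curve_in \<Omega> \<gamma> L" "\<gamma> 0 = a" "\<gamma> L = b" "L \<le> CU * dist a b"
      and gU: "\<forall>t\<in>{0..L}. min t (L - t) \<le> CU * infdist (\<gamma> t) (bdry \<Omega>)"
      using U a(1) b(1) by blast
    have L0: "0 \<le> L" using g(1) unfolding arclength_curve_in_def by auto
    have sL: "s \<le> L" using arc_dist[OF g(1), of 0 L] L0 g b by simp
    define z where "z = \<gamma> (L/2)"
    have zO: "z \<in> \<Omega>" using g(1) L0 unfolding arclength_curve_in_def z_def by auto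
    have "min (L/2) (L - L/2) \<le> CU * infdist z (bdry \<Omega>)" using gU[rule_format, of "L/2"] L0 unfolding z_def by simp
    then have inf: "L/2 \<le> CU * infdist z (bdry \<Omega>)" by simp
    have az: "dist a z \<le> L/2" using arc_dist[OF g(1), of 0 "L/2"] L0 g(2) unfolding z_def by simp
    have rK: "r / K = s / (2*CU)" using CU unfolding K_def s_def by (simp add: field_simps)
    have rho_inf: "r / K \<le> infdist z (bdry \<Omega>)"
    proof -
      have "s / (2*CU) \<le> L / (2*CU)" using sL CU by (simp add: divide_right_mono)
      also have "\<dots> \<le> infdist z (bdry \<Omega>)" using inf CU by (simp add: field_simps)
      finally show ?thesis using rK by simp
    qed
    have "dist x z + r / K \<le> r"
    proof -
      have "dist x z \<le> dist a x + dist a z" by (metis dist_commute dist_triangle)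
      also have "\<dots> \<le> s + CU * s / 2" using a(2) az g(4) b(2) by simp
      finally have "dist x z \<le> s + CU * s / 2" .
      moreover have "r / K \<le> s / 2" unfolding rK using CU s by (intro divide_left_mono) auto
      moreover have "s * (2 + CU) = r" using CU unfolding s_def by simp
      moreover have "s + CU * s / 2 + s/2 \<le> s * (2 + CU)" proof -
        have "0 \<le> CU * s" using s CU by simp
        then show ?thesis using s by (simp add: algebra_simps)
      qed
      ultimately show ?thesis by linarith
    qed
    then have sub: "ball z (r/K) \<subseteq> ball x r"
    proof -
      show ?thesis
    proof
      fix w assume "w \<in> ball z (r/K)"
      then have "dist z w < r/K" by simp
      moreover have "dist x w \<le> dist x z + dist z w" by (rule dist_triangle)
      ultimately show "w \<in> ball x r" using \<open>dist x z + r / K \<le> r\<close> by simp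
    qed
    qed
    have "ball z (r/K) \<inter> closure \<Omega> \<subseteq> \<Omega>"
    proof
      fix w assume w: "w \<in> ball z (r/K) \<inter> closure \<Omega>"
      show "w \<in> \<Omega>"
      proof (rule ccontr)
        assume "w \<notin> \<Omega>"
        then have "w \<in> bdry \<Omega>" using w unfolding bdry_def by auto
        then have "infdist z (bdry \<Omega>) \<le> dist z w" by (rule infdist_le)
        then show False using w rho_inf by auto
      qed
    qed
    then show "\<exists>z\<in>\<Omega>. ball z (r/K) \<subseteq> ball x r \<and> ball z (r/K) \<inter> closure \<Omega> \<subseteq> \<Omega>"
      using zO sub by blast
  qed
  then show ?thesis using K1 by blast
qed



lemma measure_le_fin:
  assumes "A \<subseteq> B" "A \<in> sets M" "B \<in> sets M" "emeasure M B < \<infinity>"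
  shows "measure M A \<le> measure M B"
  using assms by (intro measure_mono_fmeasurable) (auto simp: fmeasurable_def)

lemma doubling_real:
  fixes \<mu> :: "'a::metric_space measure"
  assumes "doubling_on \<mu> S"
  shows "\<exists>C\<ge>1. \<forall>x\<in>S. \<forall>r>0. 0 < measure \<mu> (ball x r \<inter> S) \<and> emeasure \<mu> (ball x r \<inter> S) < \<infinity> \<and>
          measure \<mu> (ball x (2*r) \<inter> S) \<le> C * measure \<mu> (ball x r \<inter> S)"
proof -
  obtain C where C: "\<forall>x\<in>S. \<forall>r>0. 0 < emeasure \<mu> (ball x r \<inter> S) \<and> emeasure \<mu> (ball x r \<inter> S) < \<infinity> \<and>
          emeasure \<mu> (ball x (2*r) \<inter> S) \<le> ennreal C * emeasure \<mu> (ball x r \<inter> S)"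
    using assms unfolding doubling_on_def by blast
  define C' where "C' = max 1 C"
  have "\<forall>x\<in>S. \<forall>r>0. 0 < measure \<mu> (ball x r \<inter> S) \<and> emeasure \<mu> (ball x r \<inter> S) < \<infinity> \<and>
          measure \<mu> (ball x (2*r) \<inter> S) \<le> C' * measure \<mu> (ball x r \<inter> S)"
  proof (intro ballI allI impI conjI)
    fix x r assume x: "x \<in> S" and r: "(r::real) > 0"
    have r2: "2*r > 0" using r by simp
    have f1: "emeasure \<mu> (ball x r \<inter> S) = ennreal (measure \<mu> (ball x r \<inter> S))"
    proof -
      have "emeasure \<mu> (ball x r \<inter> S) < \<infinity>" using C x r by blast
      then show ?thesis by (intro emeasure_eq_ennreal_measure) simp
    qed
    have f2: "emeasure \<mu> (ball x (2*r) \<inter> S) = ennreal (measure \<mu> (ball x (2*r) \<inter> S))"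
    proof -
      have "emeasure \<mu> (ball x (2*r) \<inter> S) < \<infinity>" using C x r2 by blast
      then show ?thesis by (intro emeasure_eq_ennreal_measure) simp
    qed
    show "0 < measure \<mu> (ball x r \<inter> S)" using C x r f1 by (metis ennreal_less_zero_iff)
    show "emeasure \<mu> (ball x r \<inter> S) < \<infinity>" using C x r by auto
    have "ennreal (measure \<mu> (ball x (2*r) \<inter> S)) \<le> ennreal C * ennreal (measure \<mu> (ball x r \<inter> S))"
      using C x r f1 f2 by metis
    also have "\<dots> \<le> ennreal C' * ennreal (measure \<mu> (ball x r \<inter> S))"
      by (intro mult_right_mono ennreal_leI) (auto simp: C'_def)
    also have "\<dots> = ennreal (C' * measure \<mu> (ball x r \<inter> S))"
      by (simp add: C'_def ennreal_mult)
    finally show "measure \<mu> (ball x (2*r) \<inter> S) \<le> C' * measure \<mu> (ball x r \<inter> S)"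
      by (simp add: C'_def)
  qed
  moreover have "C' \<ge> 1" by (simp add: C'_def)
  ultimately show ?thesis by blast
qed

lemma doubling_iter:
  fixes \<mu> :: "'a::metric_space measure"
  assumes D: "\<forall>x\<in>S. \<forall>r>0. measure \<mu> (ball x (2*r) \<inter> S) \<le> C * measure \<mu> (ball x r \<inter> S)"
    and C: "C \<ge> 1" and x: "x \<in> S" and r: "r > 0"
  shows "measure \<mu> (ball x (2^m * r) \<inter> S) \<le> C^m * measure \<mu> (ball x r \<inter> S)"
proof (induction m)
  case 0 then show ?case by simp
next
  case (Suc m)
  have "measure \<mu> (ball x (2^Suc m * r) \<inter> S) = measure \<mu> (ball x (2 * (2^m * r)) \<inter> S)" by (simp add: mult.assoc)
  also have "\<dots> \<le> C * measure \<mu> (ball x (2^m * r) \<inter> S)" using D x r by simp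
  also have "\<dots> \<le> C * (C^m * measure \<mu> (ball x r \<inter> S))" using Suc C by (intro mult_left_mono) auto
  finally show ?case by (simp add: mult.assoc)
qed



lemma nu_compare:
  fixes \<mu> \<nu> :: "'a::metric_space measure"
  assumes hyps: "standing_hyps p \<mu> \<Omega> \<nu> \<Theta>" and unb: "\<not> bounded (bdry \<Omega>)"
  shows "\<exists>C\<ge>1. \<forall>x\<in>bdry \<Omega>. \<forall>r>0.
     (1/C) * measure \<mu> (ball x r \<inter> \<Omega>) * r powr (-\<Theta>) \<le> measure \<nu> (ball x r) \<and>
     measure \<nu> (ball x r) \<le> C * measure \<mu> (ball x r \<inter> \<Omega>) * r powr (-\<Theta>)"
proof -
  have sm: "sets \<mu> = sets borel" and sn: "sets \<nu> = sets borel" and op: "open \<Omega>"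
    and dbl: "doubling_on \<mu> (closure \<Omega>)"
    and nfin: "\<forall>x r. r > 0 \<longrightarrow> emeasure \<nu> (ball x r) < \<infinity>"
    using hyps unfolding standing_hyps_def uniform_domain_def domain_def by auto
  obtain C where C1: "C \<ge> 1" and C: "\<forall>x\<in>bdry \<Omega>. \<forall>r. 0 < r \<and> (bounded (bdry \<Omega>) \<longrightarrow> r < 2 * diameter (bdry \<Omega>)) \<longrightarrow>
        ennreal (1/C) * emeasure \<mu> (ball x r \<inter> \<Omega>) * ennreal (r powr (-\<Theta>)) \<le> emeasure \<nu> (ball x r) \<and>
        emeasure \<nu> (ball x r) \<le> ennreal C * emeasure \<mu> (ball x r \<inter> \<Omega>) * ennreal (r powr (-\<Theta>))"
    using hyps unfolding standing_hyps_def by blast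
  obtain Cm where "Cm \<ge> 1" and Dm: "\<forall>x\<in>closure \<Omega>. \<forall>r>0. 0 < measure \<mu> (ball x r \<inter> closure \<Omega>) \<and> emeasure \<mu> (ball x r \<inter> closure \<Omega>) < \<infinity> \<and>
          measure \<mu> (ball x (2*r) \<inter> closure \<Omega>) \<le> Cm * measure \<mu> (ball x r \<inter> closure \<Omega>)"
    using doubling_real[OF dbl] by blast
  have "\<forall>x\<in>bdry \<Omega>. \<forall>r>0.
     (1/C) * measure \<mu> (ball x r \<inter> \<Omega>) * r powr (-\<Theta>) \<le> measure \<nu> (ball x r) \<and>
     measure \<nu> (ball x r) \<le> C * measure \<mu> (ball x r \<inter> \<Omega>) * r powr (-\<Theta>)"
  proof (intro ballI allI impI)
    fix x r assume x: "x \<in> bdry \<Omega>" and r: "(r::real) > 0"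
    have xc: "x \<in> closure \<Omega>" using x unfolding bdry_def by auto
    have "emeasure \<mu> (ball x r \<inter> \<Omega>) \<le> emeasure \<mu> (ball x r \<inter> closure \<Omega>)"
      by (rule emeasure_mono) (auto simp: sm closure_subset[THEN subsetD])
    also have "\<dots> < \<infinity>" using Dm xc r by blast
    finally have fm: "emeasure \<mu> (ball x r \<inter> \<Omega>) = ennreal (measure \<mu> (ball x r \<inter> \<Omega>))"
      by (intro emeasure_eq_ennreal_measure) simp
    have fn: "emeasure \<nu> (ball x r) = ennreal (measure \<nu> (ball x r))"
    proof -
      have "emeasure \<nu> (ball x r) < \<infinity>" using nfin r by blast
      then show ?thesis by (intro emeasure_eq_ennreal_measure) simp
    qed
    have CC: "ennreal (1/C) * emeasure \<mu> (ball x r \<inter> \<Omega>) * ennreal (r powr (-\<Theta>)) \<le> emeasure \<nu> (ball x r) \<and>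
        emeasure \<nu> (ball x r) \<le> ennreal C * emeasure \<mu> (ball x r \<inter> \<Omega>) * ennreal (r powr (-\<Theta>))"
      using C x r unb by blast
    have e1: "ennreal (1/C) * emeasure \<mu> (ball x r \<inter> \<Omega>) * ennreal (r powr (-\<Theta>)) =
       ennreal ((1/C) * measure \<mu> (ball x r \<inter> \<Omega>) * r powr (-\<Theta>))"
      using C1 unfolding fm by (simp add: ennreal_mult[symmetric] del: ennreal_mult_divide_eq)
    have e2: "ennreal C * emeasure \<mu> (ball x r \<inter> \<Omega>) * ennreal (r powr (-\<Theta>)) =
       ennreal (C * measure \<mu> (ball x r \<inter> \<Omega>) * r powr (-\<Theta>))"
      using C1 unfolding fm by (simp add: ennreal_mult[symmetric] del: ennreal_mult_divide_eq)
    show "(1/C) * measure \<mu> (ball x r \<inter> \<Omega>) * r powr (-\<Theta>) \<le> measure \<nu> (ball x r) \<and>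
     measure \<nu> (ball x r) \<le> C * measure \<mu> (ball x r \<inter> \<Omega>) * r powr (-\<Theta>)"
    proof -
      have "0 \<le> measure \<nu> (ball x r)" by simp
      moreover have "0 \<le> C * measure \<mu> (ball x r \<inter> \<Omega>) * r powr (-\<Theta>)" using C1 by simp
      ultimately show ?thesis using CC measure_nonneg[of \<nu> "ball x r"] unfolding e1 e2 fn ennreal_le_iff2 by linarith
    qed
  qed
  then show ?thesis using C1 by blast
qed



lemma nu_pos_doubling:
  fixes \<mu> \<nu> :: "'a::metric_space measure"
  assumes hyps: "standing_hyps p \<mu> \<Omega> \<nu> \<Theta>" and unb: "\<not> bounded (bdry \<Omega>)"
  shows "(\<forall>x\<in>bdry \<Omega>. \<forall>r>0. measure \<nu> (ball x r) > 0) \<and>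
         (\<forall>x0\<in>bdry \<Omega>. \<exists>Cd. \<forall>R>0. measure \<nu> (ball x0 (2*R)) \<le> Cd * measure \<nu> (ball x0 R))"
proof -
  have sm: "sets \<mu> = sets borel" and op: "open \<Omega>"
    and dbl: "doubling_on \<mu> (closure \<Omega>)" and ud: "uniform_domain \<Omega>"
    and Th: "\<Theta> > 0"
    using hyps unfolding standing_hyps_def uniform_domain_def domain_def by auto
  obtain C where C1: "C \<ge> 1" and C: "\<forall>x\<in>bdry \<Omega>. \<forall>r>0.
     (1/C) * measure \<mu> (ball x r \<inter> \<Omega>) * r powr (-\<Theta>) \<le> measure \<nu> (ball x r) \<and>
     measure \<nu> (ball x r) \<le> C * measure \<mu> (ball x r \<inter> \<Omega>) * r powr (-\<Theta>)"
    using nu_compare[OF hyps unb] by blast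
  obtain Cm where Cm1: "Cm \<ge> 1" and Dm: "\<forall>x\<in>closure \<Omega>. \<forall>r>0. 0 < measure \<mu> (ball x r \<inter> closure \<Omega>) \<and> emeasure \<mu> (ball x r \<inter> closure \<Omega>) < \<infinity> \<and>
          measure \<mu> (ball x (2*r) \<inter> closure \<Omega>) \<le> Cm * measure \<mu> (ball x r \<inter> closure \<Omega>)"
    using doubling_real[OF dbl] by blast
  obtain K where K1: "K \<ge> 1" and K: "\<forall>x\<in>bdry \<Omega>. \<forall>r>0. \<exists>z\<in>\<Omega>. ball z (r/K) \<subseteq> ball x r \<and> ball z (r/K) \<inter> closure \<Omega> \<subseteq> \<Omega>"
    using corkscrew[OF ud unb] by blast
  have Oc: "\<Omega> \<subseteq> closure \<Omega>" by (rule closure_subset)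
  have bc: "bdry \<Omega> \<subseteq> closure \<Omega>" unfolding bdry_def by auto
  have low: "\<exists>z\<in>\<Omega>. ball z (r/K) \<subseteq> ball x r \<and> 0 < measure \<mu> (ball z (r/K) \<inter> closure \<Omega>) \<and>
        measure \<mu> (ball z (r/K) \<inter> closure \<Omega>) \<le> measure \<mu> (ball x r \<inter> \<Omega>)"
    if x: "x \<in> bdry \<Omega>" and r: "r > 0" for x r
  proof -
    obtain z where z: "z \<in> \<Omega>" "ball z (r/K) \<subseteq> ball x r" "ball z (r/K) \<inter> closure \<Omega> \<subseteq> \<Omega>"
      using K x r by blast
    have rK: "r/K > 0" using r K1 by simp
    have "0 < measure \<mu> (ball z (r/K) \<inter> closure \<Omega>)" using Dm z(1) Oc rK by blast
    moreover have "measure \<mu> (ball z (r/K) \<inter> closure \<Omega>) \<le> measure \<mu> (ball x r \<inter> \<Omega>)"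
    proof (rule measure_le_fin)
      show "ball z (r/K) \<inter> closure \<Omega> \<subseteq> ball x r \<inter> \<Omega>" using z by auto
      show "ball z (r/K) \<inter> closure \<Omega> \<in> sets \<mu>" by (simp add: sm)
      show "ball x r \<inter> \<Omega> \<in> sets \<mu>" using op by (simp add: sm)
      have "emeasure \<mu> (ball x r \<inter> \<Omega>) \<le> emeasure \<mu> (ball x r \<inter> closure \<Omega>)"
        by (rule emeasure_mono) (use Oc in \<open>auto simp: sm\<close>)
      also have "\<dots> < \<infinity>" using Dm x bc r by blast
      finally show "emeasure \<mu> (ball x r \<inter> \<Omega>) < \<infinity>" .
    qed
    ultimately show ?thesis using z by blast
  qed
  have pos: "\<forall>x\<in>bdry \<Omega>. \<forall>r>0. measure \<nu> (ball x r) > 0"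
  proof (intro ballI allI impI)
    fix x r assume x: "x \<in> bdry \<Omega>" and r: "(r::real) > 0"
    obtain z where "0 < measure \<mu> (ball z (r/K) \<inter> closure \<Omega>)"
        "measure \<mu> (ball z (r/K) \<inter> closure \<Omega>) \<le> measure \<mu> (ball x r \<inter> \<Omega>)"
      using low[OF x r] by blast
    then have "0 < measure \<mu> (ball x r \<inter> \<Omega>)" by linarith
    then have "0 < (1/C) * measure \<mu> (ball x r \<inter> \<Omega>) * r powr (-\<Theta>)" using C1 r by simp
    also have "\<dots> \<le> measure \<nu> (ball x r)" using C x r by blast
    finally show "measure \<nu> (ball x r) > 0" .
  qed
  have dbl_nu: "\<exists>Cd. \<forall>R>0. measure \<nu> (ball x0 (2*R)) \<le> Cd * measure \<nu> (ball x0 R)"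
    if x0: "x0 \<in> bdry \<Omega>" for x0
  proof -
    obtain m :: nat where m: "4 * K < 2 ^ m" using real_arch_pow[of 2 "4*K"] by auto
    have "\<forall>R>0. measure \<nu> (ball x0 (2*R)) \<le> (C * Cm^m * C) * measure \<nu> (ball x0 R)"
    proof (intro allI impI)
      fix R :: real assume R: "R > 0"
      obtain z where zO: "z \<in> \<Omega>" and zb: "ball z (R/K) \<subseteq> ball x0 R"
        and zl: "measure \<mu> (ball z (R/K) \<inter> closure \<Omega>) \<le> measure \<mu> (ball x0 R \<inter> \<Omega>)"
        using low[OF x0 R] by blast
      have rK: "R/K > 0" using R K1 by simp
      have "z \<in> ball z (R/K)" using rK by simp
      then have "z \<in> ball x0 R" using zb by (rule subsetD[rotated])
      then have dz: "dist x0 z < R" by simp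
      have "ball x0 (2*R) \<inter> \<Omega> \<subseteq> ball z (2^m * (R/K)) \<inter> closure \<Omega>"
      proof
        fix w assume w: "w \<in> ball x0 (2*R) \<inter> \<Omega>"
        have "dist z w \<le> dist x0 z + dist x0 w" by (metis dist_commute dist_triangle)
        also have "\<dots> < 4 * R" using w dz R by simp
        also have "4 * R \<le> 2^m * (R/K)" using m K1 R by (simp add: field_simps)
        finally show "w \<in> ball z (2^m * (R/K)) \<inter> closure \<Omega>" using w Oc by auto
      qed
      moreover have "emeasure \<mu> (ball z (2^m * (R/K)) \<inter> closure \<Omega>) < \<infinity>"
        using Dm zO Oc rK by (meson subsetD zero_less_power zero_less_numeral mult_pos_pos)
      ultimately have "measure \<mu> (ball x0 (2*R) \<inter> \<Omega>) \<le> measure \<mu> (ball z (2^m * (R/K)) \<inter> closure \<Omega>)"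
        using op by (intro measure_le_fin) (auto simp: sm)
      also have "\<dots> \<le> Cm^m * measure \<mu> (ball z (R/K) \<inter> closure \<Omega>)"
        using Dm Cm1 zO Oc rK by (intro doubling_iter) auto
      also have "\<dots> \<le> Cm^m * measure \<mu> (ball x0 R \<inter> \<Omega>)"
        using zl Cm1 by (intro mult_left_mono) auto
      finally have A: "measure \<mu> (ball x0 (2*R) \<inter> \<Omega>) \<le> Cm^m * measure \<mu> (ball x0 R \<inter> \<Omega>)" .
      have B: "measure \<mu> (ball x0 R \<inter> \<Omega>) \<le> C * measure \<nu> (ball x0 R) * R powr \<Theta>"
      proof -
        have "(1/C) * measure \<mu> (ball x0 R \<inter> \<Omega>) * R powr (-\<Theta>) \<le> measure \<nu> (ball x0 R)"
          using C x0 R by blast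
        then show ?thesis using C1 R by (simp add: powr_minus field_simps)
      qed
      have "measure \<nu> (ball x0 (2*R)) \<le> C * measure \<mu> (ball x0 (2*R) \<inter> \<Omega>) * (2*R) powr (-\<Theta>)"
        using C x0 R by simp
      also have "\<dots> \<le> C * (Cm^m * (C * measure \<nu> (ball x0 R) * R powr \<Theta>)) * (2*R) powr (-\<Theta>)"
        using A B C1 Cm1 by (intro mult_right_mono mult_left_mono order.trans[OF A]) auto
      also have "\<dots> = (C * Cm^m * C) * measure \<nu> (ball x0 R) * (R powr \<Theta> * (2*R) powr (-\<Theta>))"
        by (simp add: algebra_simps)
      also have "R powr \<Theta> * (2*R) powr (-\<Theta>) = 2 powr (-\<Theta>)"
        using R by (simp add: powr_mult powr_minus field_simps)
      also have "(C * Cm^m * C) * measure \<nu> (ball x0 R) * 2 powr (-\<Theta>) \<le> (C * Cm^m * C) * measure \<nu> (ball x0 R)"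
      proof -
        have "2 powr (-\<Theta>) \<le> 1" using Th by (simp add: powr_minus_divide ge_one_powr_ge_zero)
        then show ?thesis using C1 Cm1 by (intro mult_left_le) auto
      qed
      finally show "measure \<nu> (ball x0 (2*R)) \<le> (C * Cm^m * C) * measure \<nu> (ball x0 R)" .
    qed
    then show ?thesis by blast
  qed
  show ?thesis using pos dbl_nu by blast
qed



lemma ball_measure_mono:
  fixes \<nu> :: "'a::metric_space measure"
  assumes sn: "sets \<nu> = sets borel" and nfin: "\<forall>x r. r > 0 \<longrightarrow> emeasure \<nu> (ball x r) < \<infinity>"
  shows "mono (\<lambda>r. measure \<nu> (ball x r))"
proof (rule monoI)
  fix r r' :: real assume rr: "r \<le> r'"
  show "measure \<nu> (ball x r) \<le> measure \<nu> (ball x r')"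
  proof (cases "r' > 0")
    case True
    then show ?thesis using rr nfin by (intro measure_le_fin) (auto simp: sn)
  next
    case False
    then have "ball x r = {}" "ball x r' = {}" using rr by auto
    then show ?thesis by (metis order_refl)
  qed
qed

lemma meas_dist:
  fixes \<nu> :: "'a::metric_space measure"
  assumes sn: "sets \<nu> = sets borel"
  shows "(\<lambda>y. dist x y) \<in> borel_measurable \<nu>" "(\<lambda>y. dist y x) \<in> borel_measurable \<nu>"
proof -
  have "(\<lambda>y. dist x y) \<in> borel_measurable borel" "(\<lambda>y. dist y x) \<in> borel_measurable borel"
    by (intro borel_measurable_continuous_onI continuous_intros)+
  then show "(\<lambda>y. dist x y) \<in> borel_measurable \<nu>" "(\<lambda>y. dist y x) \<in> borel_measurable \<nu>"
    using measurable_cong_sets[OF sn refl] by auto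
qed

lemma meas_ballm:
  fixes \<nu> :: "'a::metric_space measure"
  assumes sn: "sets \<nu> = sets borel" and nfin: "\<forall>x r. r > 0 \<longrightarrow> emeasure \<nu> (ball x r) < \<infinity>"
  shows "(\<lambda>y. measure \<nu> (ball x (dist x y))) \<in> borel_measurable \<nu>"
proof -
  have m: "(\<lambda>r. measure \<nu> (ball x r)) \<in> borel_measurable borel"
    by (rule borel_measurable_mono[OF ball_measure_mono[OF sn nfin]])
  show ?thesis using measurable_compose[OF meas_dist(1)[OF sn] m] by simp
qed

lemma meas_F:
  fixes \<nu> :: "'a::metric_space measure"
  assumes sn: "sets \<nu> = sets borel" and nfin: "\<forall>x r. r > 0 \<longrightarrow> emeasure \<nu> (ball x r) < \<infinity>"
    and h: "h \<in> borel_measurable \<nu>"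
  shows "(\<lambda>y. ennreal (\<bar>h x - h y\<bar> powr p /
         (dist x y powr c * measure \<nu> (ball x (dist x y))))) \<in> borel_measurable \<nu>"
  using meas_ballm[OF sn nfin, of x] meas_dist[OF sn, of x] h by measurable

lemma meas_J:
  fixes \<nu> :: "'a::metric_space measure"
  assumes sn: "sets \<nu> = sets borel" and nfin: "\<forall>x r. r > 0 \<longrightarrow> emeasure \<nu> (ball x r) < \<infinity>"
  shows "(\<lambda>x. Jweight p \<Theta> \<nu> x0 x) \<in> borel_measurable \<nu>"
  unfolding Jweight_def using meas_ballm[OF sn nfin, of x0] meas_dist[OF sn, of x0] by measurable



theorem lemma6p1:
  fixes p \<Theta> :: real and \<mu> \<nu> :: "'a::metric_space measure" and \<Omega> :: "'a set"
    and x0 :: 'a and f h :: "'a \<Rightarrow> real"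
  assumes hyps: "standing_hyps p \<mu> \<Omega> \<nu> \<Theta>"
    and unb: "\<not> bounded (bdry \<Omega>)"
    and x0: "x0 \<in> bdry \<Omega>"
    and f_meas: "f \<in> borel_measurable \<nu>"
    and f_Lp: "(\<integral>\<^sup>+ x. ennreal (\<bar>f x\<bar> powr conj_exp p) \<partial>\<nu>) < \<infinity>"
    and f_LpJ: "(\<integral>\<^sup>+ x. ennreal (\<bar>f x\<bar> powr conj_exp p)
                   \<partial>(density \<nu> (\<lambda>x. ennreal (Jweight p \<Theta> \<nu> x0 x)))) < \<infinity>"
    and f_int: "integrable \<nu> f"
    and f_mean: "(\<integral>x. f x \<partial>\<nu>) = 0"
    and h: "h \<in> HB p (theta_of p \<Theta>) \<nu>"
  shows "(\<forall>k. integrable \<nu> (\<lambda>x. fk \<nu> \<Omega> x0 f k x * h x)) \<and>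
         bdd_above (range (\<lambda>k. \<bar>\<integral>x. fk \<nu> \<Omega> x0 f k x * h x \<partial>\<nu>\<bar>))"
proof -
  define q where "q = conj_exp p"
  have p1: "1 < p" and sn: "sets \<nu> = sets borel"
    and nfin: "\<forall>x r. r > 0 \<longrightarrow> emeasure \<nu> (ball x r) < \<infinity>"
    and Th: "0 < \<Theta>" "\<Theta> < p" and nuout: "emeasure \<nu> (UNIV - bdry \<Omega>) = 0"
    and ud: "uniform_domain \<Omega>"
    using hyps unfolding standing_hyps_def by auto
  have op: "open \<Omega>" using ud unfolding uniform_domain_def domain_def by auto
  have thp: "theta_of p \<Theta> * p > 0" using p1 Th by (simp add: theta_of_def field_simps)
  define tp where "tp = theta_of p \<Theta> * p"
  have tp: "tp > 0" using thp by (simp add: tp_def)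
  define F where "F x y = \<bar>h x - h y\<bar> powr p / (dist x y powr (theta_of p \<Theta> * p) * measure \<nu> (ball x (dist x y)))" for x y
  have Fnn: "F x y \<ge> 0" for x y unfolding F_def by simp
  have hm: "h \<in> borel_measurable \<nu>" and hE: "(\<integral>\<^sup>+ x. \<integral>\<^sup>+ y. ennreal (F x y) \<partial>\<nu> \<partial>\<nu>) < \<infinity>"
    using h unfolding HB_def F_def by auto
  have Fm: "(\<lambda>y. ennreal (F x y)) \<in> borel_measurable \<nu>" for x
    unfolding F_def by (rule meas_F[OF sn nfin hm])
  have pos: "\<forall>x\<in>bdry \<Omega>. \<forall>r>0. measure \<nu> (ball x r) > 0"
    and "\<forall>x0\<in>bdry \<Omega>. \<exists>Cd. \<forall>R>0. measure \<nu> (ball x0 (2*R)) \<le> Cd * measure \<nu> (ball x0 R)"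
    using nu_pos_doubling[OF hyps unb] by blast+
  then obtain Cd where Cd: "\<forall>R>0. measure \<nu> (ball x0 (2*R)) \<le> Cd * measure \<nu> (ball x0 R)"
    using x0 by blast
  have bdry_closed: "closed (bdry \<Omega>)" unfolding bdry_def using op by (intro closed_Diff) auto
  then have bdry_sets: "bdry \<Omega> \<in> sets \<nu>" by (simp add: sn)
  have nub: "emeasure \<nu> (bdry \<Omega>) \<noteq> 0"
  proof
    assume z: "emeasure \<nu> (bdry \<Omega>) = 0"
    have "emeasure \<nu> (ball x0 1) \<le> emeasure \<nu> (bdry \<Omega> \<union> (UNIV - bdry \<Omega>))"
      by (rule emeasure_mono) (auto simp: sn)
    also have "\<dots> \<le> emeasure \<nu> (bdry \<Omega>) + emeasure \<nu> (UNIV - bdry \<Omega>)"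
      using bdry_sets by (intro emeasure_subadditive) (auto simp: sn)
    finally have "emeasure \<nu> (ball x0 1) = 0" using z nuout by simp
    then have "measure \<nu> (ball x0 1) = 0" by (simp add: measure_def)
    moreover have "0 < measure \<nu> (ball x0 1)" using pos x0 zero_less_one by blast
    ultimately show False by simp
  qed
  obtain x1 where x1: "x1 \<in> bdry \<Omega>" and E1: "(\<integral>\<^sup>+ y. ennreal (F x1 y) \<partial>\<nu>) < \<infinity>"
  proof (rule ccontr)
    assume nt: "\<not> thesis"
    have all: "\<forall>x\<in>bdry \<Omega>. (\<integral>\<^sup>+ y. ennreal (F x y) \<partial>\<nu>) = \<infinity>"
    proof (intro ballI)
      fix x assume xb: "x \<in> bdry \<Omega>"
      show "(\<integral>\<^sup>+ y. ennreal (F x y) \<partial>\<nu>) = \<infinity>"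
      proof (rule ccontr)
        assume "(\<integral>\<^sup>+ y. ennreal (F x y) \<partial>\<nu>) \<noteq> \<infinity>"
        then have "(\<integral>\<^sup>+ y. ennreal (F x y) \<partial>\<nu>) < \<infinity>" by (simp add: less_top)
        then show False using that[OF xb] nt by blast
      qed
    qed
    have "\<infinity> * emeasure \<nu> (bdry \<Omega>) = (\<integral>\<^sup>+ x. \<infinity> * indicator (bdry \<Omega>) x \<partial>\<nu>)"
      using bdry_sets by (simp add: nn_integral_cmult_indicator)
    also have "\<dots> \<le> (\<integral>\<^sup>+ x. \<integral>\<^sup>+ y. ennreal (F x y) \<partial>\<nu> \<partial>\<nu>)"
      by (rule nn_integral_mono) (use all in \<open>auto split: split_indicator\<close>)
    finally show False using hE nub by (simp add: ennreal_mult_eq_top_iff)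
  qed
  define d01 where "d01 = dist x0 x1"
  define R0 where "R0 = 2 * d01 + 1"
  have R01: "R0 \<ge> 1" unfolding R0_def d01_def by simp
  define M where "M = max 1 ((R0 + d01) powr tp * measure \<nu> (ball x1 (R0 + d01)))"
  have M1: "M \<ge> 1" unfolding M_def by simp
  define K where "K = max M (2 powr tp * Cd)"
  have KM: "K \<ge> M" unfolding K_def by simp
  define c where "c = \<bar>h x1\<bar>"
  define J where "J y = Jweight p \<Theta> \<nu> x0 y" for y
  have Jnn: "J y \<ge> 0" for y unfolding J_def Jweight_def by simp
  have q1: "q > 1" using p1 by (simp add: q_def conj_exp_def field_simps)
  have near: "\<bar>h x1 - h y\<bar> powr p \<le> M * F x1 y" if y: "dist y x0 < R0" for y
  proof (cases "y = x1")
    case True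
    then show ?thesis using Fnn[of x1 y] M1 by simp
  next
    case False
    define d1 where "d1 = dist x1 y"
    have d1: "d1 > 0" using False by (simp add: d1_def)
    have V1: "measure \<nu> (ball x1 d1) > 0" using pos x1 d1 by blast
    have d1le: "d1 \<le> R0 + d01"
    proof -
      have "d1 \<le> dist x1 x0 + dist x0 y" unfolding d1_def by (rule dist_triangle)
      then show ?thesis using y unfolding d01_def by (simp add: dist_commute)
    qed
    have "d1 powr tp \<le> (R0 + d01) powr tp" using d1le d1 tp by (intro powr_mono2) auto
    moreover have "measure \<nu> (ball x1 d1) \<le> measure \<nu> (ball x1 (R0 + d01))"
      using d1le d1 nfin by (intro measure_le_fin) (auto simp: sn)
    ultimately have den: "d1 powr tp * measure \<nu> (ball x1 d1) \<le> M"
      unfolding M_def using V1 by (smt (verit) mult_mono powr_ge_zero measure_nonneg)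
    have denp: "d1 powr tp * measure \<nu> (ball x1 d1) > 0" using d1 V1 by simp
    have "F x1 y = \<bar>h x1 - h y\<bar> powr p / (d1 powr tp * measure \<nu> (ball x1 d1))"
      unfolding F_def d1_def tp_def by simp
    then have "\<bar>h x1 - h y\<bar> powr p = F x1 y * (d1 powr tp * measure \<nu> (ball x1 d1))"
      using denp V1 d1 by simp
    also have "\<dots> \<le> F x1 y * M" using den Fnn by (intro mult_left_mono) auto
    finally show ?thesis by (simp add: mult.commute)
  qed
  have far: "\<bar>f y\<bar> * \<bar>h x1 - h y\<bar> \<le> \<bar>f y\<bar> powr q * J y + 2 powr tp * Cd * F x1 y"
    if y: "dist y x0 \<ge> R0" for y
  proof -
    define D where "D = dist y x0"
    have D: "D \<ge> 2 * d01 + 1" using y unfolding D_def R0_def by simp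
    have d0: "d01 \<ge> 0" unfolding d01_def by simp
    have Dp: "D > 0" using D d0 by simp
    define V where "V = measure \<nu> (ball x0 D)"
    have Vp: "V > 0" using pos x0 Dp unfolding V_def by blast
    have Jy: "J y = D powr (q * theta_of p \<Theta>) * V powr (q / p)"
      unfolding J_def Jweight_def D_def V_def q_def by (simp add: dist_commute)
    have Jp: "J y > 0" using Jy Dp Vp by simp
    have Jpow: "J y powr (p - 1) = D powr tp * V"
    proof -
      have qp: "q * (p - 1) = p" using p1 by (simp add: q_def conj_exp_def field_simps)
      have "J y powr (p - 1) = D powr (q * theta_of p \<Theta> * (p - 1)) * V powr (q / p * (p - 1))"
        unfolding Jy using Dp Vp by (simp add: powr_mult powr_powr)
      also have "q * theta_of p \<Theta> * (p - 1) = tp"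
      proof -
        have "q * theta_of p \<Theta> * (p - 1) = theta_of p \<Theta> * (q * (p - 1))" by (simp add: algebra_simps)
        then show ?thesis unfolding tp_def using qp by simp
      qed
      also have "q / p * (p - 1) = 1" using qp p1 by (simp add: field_simps)
      finally show ?thesis using Vp by simp
    qed
    have Y: "\<bar>f y\<bar> * \<bar>h x1 - h y\<bar> \<le> \<bar>f y\<bar> powr q * J y + \<bar>h x1 - h y\<bar> powr p / J y powr (p - 1)"
      using weighted_young[OF p1 _ _ Jp, of "\<bar>f y\<bar>" "\<bar>h x1 - h y\<bar>"] unfolding q_def by simp
    define d1 where "d1 = dist x1 y"
    have d1lo: "d1 \<ge> D - d01"
    proof -
      have "D \<le> dist y x1 + dist x1 x0" unfolding D_def by (rule dist_triangle)
      then show ?thesis unfolding d1_def d01_def by (simp add: dist_commute)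
    qed
    have d1hi: "d1 \<le> D + d01"
    proof -
      have "d1 \<le> dist x1 x0 + dist x0 y" unfolding d1_def by (rule dist_triangle)
      then show ?thesis unfolding D_def d01_def by (simp add: dist_commute)
    qed
    have d1p: "d1 > 0" using d1lo D d0 by simp
    have V1: "measure \<nu> (ball x1 d1) > 0" using pos x1 d1p by blast
    have sub: "ball x1 d1 \<subseteq> ball x0 (2 * D)"
    proof
      fix w assume "w \<in> ball x1 d1"
      then have "dist x1 w < d1" by simp
      moreover have "dist x0 w \<le> dist x0 x1 + dist x1 w" by (rule dist_triangle)
      ultimately show "w \<in> ball x0 (2 * D)" using d1hi D unfolding d01_def by simp
    qed
    have "measure \<nu> (ball x1 d1) \<le> measure \<nu> (ball x0 (2 * D))"
      using sub Dp nfin by (intro measure_le_fin) (auto simp: sn)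
    also have "\<dots> \<le> Cd * V" using Cd Dp unfolding V_def by blast
    finally have V1le: "measure \<nu> (ball x1 d1) \<le> Cd * V" .
    have "d1 powr tp \<le> (2 * D) powr tp" using d1hi D d0 d1p tp by (intro powr_mono2) auto
    also have "\<dots> = 2 powr tp * D powr tp" using Dp by (simp add: powr_mult)
    finally have d1le: "d1 powr tp \<le> 2 powr tp * D powr tp" .
    have den: "d1 powr tp * measure \<nu> (ball x1 d1) \<le> (2 powr tp * Cd) * (D powr tp * V)"
    proof -
      have "d1 powr tp * measure \<nu> (ball x1 d1) \<le> (2 powr tp * D powr tp) * (Cd * V)"
        using d1le V1le V1 by (intro mult_mono) auto
      then show ?thesis by (simp add: algebra_simps)
    qed
    have denp: "d1 powr tp * measure \<nu> (ball x1 d1) > 0" using d1p V1 by simp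
    have DVp: "D powr tp * V > 0" using Dp Vp by simp
    have Fy: "F x1 y = \<bar>h x1 - h y\<bar> powr p / (d1 powr tp * measure \<nu> (ball x1 d1))"
      unfolding F_def d1_def tp_def by simp
    have "\<bar>h x1 - h y\<bar> powr p / J y powr (p - 1) = F x1 y * (d1 powr tp * measure \<nu> (ball x1 d1)) / (D powr tp * V)"
      unfolding Jpow Fy using denp V1 d1p by simp
    also have "\<dots> \<le> F x1 y * ((2 powr tp * Cd) * (D powr tp * V)) / (D powr tp * V)"
      using den Fnn DVp by (intro divide_right_mono mult_left_mono) auto
    also have "\<dots> = 2 powr tp * Cd * F x1 y" using DVp Vp Dp by simp
    finally show ?thesis using Y by simp
  qed
  have K0: "K \<ge> 0" using KM M1 by simp
  have pw: "\<bar>f y\<bar> * \<bar>h x1 - h y\<bar> \<le> \<bar>f y\<bar> powr q + \<bar>f y\<bar> powr q * J y + K * F x1 y" for y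
  proof (cases "dist y x0 < R0")
    case True
    have "\<bar>f y\<bar> * \<bar>h x1 - h y\<bar> \<le> \<bar>f y\<bar> powr q * 1 + \<bar>h x1 - h y\<bar> powr p / 1 powr (p - 1)"
      using weighted_young[OF p1, of "\<bar>f y\<bar>" "\<bar>h x1 - h y\<bar>" 1] unfolding q_def by simp
    also have "\<dots> = \<bar>f y\<bar> powr q + \<bar>h x1 - h y\<bar> powr p" by simp
    also have "\<dots> \<le> \<bar>f y\<bar> powr q + M * F x1 y" using near[OF True] by simp
    also have "\<dots> \<le> \<bar>f y\<bar> powr q + \<bar>f y\<bar> powr q * J y + K * F x1 y"
      using KM Fnn[of x1 y] Jnn[of y] by (smt (verit) mult_right_mono mult_nonneg_nonneg powr_ge_zero)
    finally show ?thesis .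
  next
    case False
    have "2 powr tp * Cd * F x1 y \<le> K * F x1 y" using Fnn[of x1 y] unfolding K_def by (intro mult_right_mono) auto
    then show ?thesis using far[of y] False by (smt (verit) powr_ge_zero)
  qed
  have pw2: "\<bar>f y * h y\<bar> \<le> \<bar>f y\<bar> powr q + \<bar>f y\<bar> powr q * J y + K * F x1 y + c * \<bar>f y\<bar>" for y
  proof -
    have "\<bar>h y\<bar> \<le> \<bar>h x1 - h y\<bar> + c" unfolding c_def by simp
    then have "\<bar>f y * h y\<bar> \<le> \<bar>f y\<bar> * (\<bar>h x1 - h y\<bar> + c)" by (simp add: abs_mult mult_left_mono)
    then show ?thesis using pw[of y] by (simp add: algebra_simps)
  qed
  have fqm: "(\<lambda>y. ennreal (\<bar>f y\<bar> powr q)) \<in> borel_measurable \<nu>" using f_meas by measurable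
  have Jm: "(\<lambda>y. ennreal (J y)) \<in> borel_measurable \<nu>" unfolding J_def using meas_J[OF sn nfin] by measurable
  have fqJm: "(\<lambda>y. ennreal (\<bar>f y\<bar> powr q * J y)) \<in> borel_measurable \<nu>"
    using f_meas meas_J[OF sn nfin] unfolding J_def by measurable
  have fam: "(\<lambda>y. ennreal (\<bar>f y\<bar>)) \<in> borel_measurable \<nu>" using f_meas by measurable
  have P1: "(\<integral>\<^sup>+ y. ennreal (\<bar>f y\<bar> powr q) \<partial>\<nu>) < \<infinity>" using f_Lp unfolding q_def .
  have P2: "(\<integral>\<^sup>+ y. ennreal (\<bar>f y\<bar> powr q * J y) \<partial>\<nu>) < \<infinity>"
  proof -
    have "(\<integral>\<^sup>+ y. ennreal (\<bar>f y\<bar> powr q * J y) \<partial>\<nu>) = (\<integral>\<^sup>+ y. ennreal (J y) * ennreal (\<bar>f y\<bar> powr q) \<partial>\<nu>)"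
      using Jnn by (intro nn_integral_cong) (simp add: ennreal_mult mult.commute)
    also have "\<dots> = (\<integral>\<^sup>+ y. ennreal (\<bar>f y\<bar> powr q) \<partial>density \<nu> (\<lambda>x. ennreal (J x)))"
      by (rule nn_integral_density[symmetric, OF Jm fqm])
    finally show ?thesis using f_LpJ unfolding q_def J_def by simp
  qed
  have P4: "(\<integral>\<^sup>+ y. ennreal (\<bar>f y\<bar>) \<partial>\<nu>) < \<infinity>" using f_int unfolding integrable_iff_bounded by simp
  have Isum: "(\<integral>\<^sup>+ y. ennreal (\<bar>f y\<bar> powr q) + ennreal (\<bar>f y\<bar> powr q * J y) + ennreal K * ennreal (F x1 y) + ennreal c * ennreal (\<bar>f y\<bar>) \<partial>\<nu>) < \<infinity>"
  proof -
    have "(\<integral>\<^sup>+ y. ennreal (\<bar>f y\<bar> powr q) + ennreal (\<bar>f y\<bar> powr q * J y) + ennreal K * ennreal (F x1 y) + ennreal c * ennreal (\<bar>f y\<bar>) \<partial>\<nu>)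
      = (\<integral>\<^sup>+ y. ennreal (\<bar>f y\<bar> powr q) \<partial>\<nu>) + (\<integral>\<^sup>+ y. ennreal (\<bar>f y\<bar> powr q * J y) \<partial>\<nu>)
        + ennreal K * (\<integral>\<^sup>+ y. ennreal (F x1 y) \<partial>\<nu>) + ennreal c * (\<integral>\<^sup>+ y. ennreal (\<bar>f y\<bar>) \<partial>\<nu>)"
      using fqm fqJm Fm[of x1] fam
      by (simp add: nn_integral_add nn_integral_cmult)
    then show ?thesis using P1 P2 E1 P4 by (simp add: ennreal_mult_less_top less_top)
  qed
  have fh_int: "integrable \<nu> (\<lambda>y. f y * h y)"
  proof (rule integrableI_bounded)
    show "(\<lambda>y. f y * h y) \<in> borel_measurable \<nu>" using f_meas hm by measurable
    have "(\<integral>\<^sup>+ y. ennreal (norm (f y * h y)) \<partial>\<nu>) \<le>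
      (\<integral>\<^sup>+ y. ennreal (\<bar>f y\<bar> powr q) + ennreal (\<bar>f y\<bar> powr q * J y) + ennreal K * ennreal (F x1 y) + ennreal c * ennreal (\<bar>f y\<bar>) \<partial>\<nu>)"
    proof (rule nn_integral_mono)
      fix y
      have "ennreal (norm (f y * h y)) \<le> ennreal (\<bar>f y\<bar> powr q + \<bar>f y\<bar> powr q * J y + K * F x1 y + c * \<bar>f y\<bar>)"
        using pw2[of y] by (intro ennreal_leI) simp
      also have "\<dots> = ennreal (\<bar>f y\<bar> powr q) + ennreal (\<bar>f y\<bar> powr q * J y) + ennreal K * ennreal (F x1 y) + ennreal c * ennreal (\<bar>f y\<bar>)"
        using Jnn[of y] Fnn[of x1 y] K0 by (simp add: ennreal_plus ennreal_mult c_def)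
      finally show "ennreal (norm (f y * h y)) \<le> ennreal (\<bar>f y\<bar> powr q) + ennreal (\<bar>f y\<bar> powr q * J y) + ennreal K * ennreal (F x1 y) + ennreal c * ennreal (\<bar>f y\<bar>)" .
    qed
    then show "(\<integral>\<^sup>+ y. ennreal (norm (f y * h y)) \<partial>\<nu>) < \<infinity>" using Isum by (rule le_less_trans)
  qed
  have Bk_eq: "Bk \<Omega> x0 k = closure \<Omega> \<inter> ball x0 (2^k)" for k
    unfolding Bk_def by (auto simp: dist_commute)
  have Bk_sets: "Bk \<Omega> x0 k \<in> sets \<nu>" for k unfolding Bk_eq by (simp add: sn)
  define B0 where "B0 = Bk \<Omega> x0 0"
  have B0sub: "B0 \<subseteq> ball x0 1" unfolding B0_def Bk_eq by auto
  have B0fin: "emeasure \<nu> B0 < \<infinity>"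
  proof -
    have "emeasure \<nu> B0 \<le> emeasure \<nu> (ball x0 1)" using B0sub by (intro emeasure_mono) (auto simp: sn)
    also have "\<dots> < \<infinity>" using nfin by simp
    finally show ?thesis .
  qed
  have hB0_int: "integrable \<nu> (\<lambda>y. h y * indicator B0 y)"
  proof (rule integrableI_bounded)
    show "(\<lambda>y. h y * indicator B0 y) \<in> borel_measurable \<nu>"
      using hm Bk_sets[of 0] unfolding B0_def by measurable
    have "(\<integral>\<^sup>+ y. ennreal (norm (h y * indicator B0 y)) \<partial>\<nu>) \<le>
       (\<integral>\<^sup>+ y. ennreal (c + 1) * indicator B0 y + ennreal M * ennreal (F x1 y) \<partial>\<nu>)"
    proof (rule nn_integral_mono)
      fix y
      show "ennreal (norm (h y * indicator B0 y)) \<le> ennreal (c + 1) * indicator B0 y + ennreal M * ennreal (F x1 y)"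
      proof (cases "y \<in> B0")
        case True
        then have "dist y x0 < R0" using B0sub R01 by (auto simp: dist_commute)
        then have nb: "\<bar>h x1 - h y\<bar> powr p \<le> M * F x1 y" by (rule near)
        have b1: "\<bar>h x1 - h y\<bar> \<le> 1 + \<bar>h x1 - h y\<bar> powr p"
        proof (cases "\<bar>h x1 - h y\<bar> \<le> 1")
          case True then show ?thesis by (smt (verit) powr_ge_zero)
        next
          case False
          then have "\<bar>h x1 - h y\<bar> powr 1 \<le> \<bar>h x1 - h y\<bar> powr p" using p1 by (intro powr_mono) auto
          then show ?thesis using False by simp
        qed
        have "\<bar>h y\<bar> \<le> c + 1 + M * F x1 y" using nb b1 unfolding c_def by linarith
        then have "ennreal (norm (h y * indicator B0 y)) \<le> ennreal (c + 1 + M * F x1 y)"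
          using True by (intro ennreal_leI) simp
        also have "\<dots> = ennreal (c + 1) * indicator B0 y + ennreal M * ennreal (F x1 y)"
          using True M1 Fnn[of x1 y] by (simp add: ennreal_plus ennreal_mult c_def)
        finally show ?thesis .
      next
        case False then show ?thesis by simp
      qed
    qed
    also have "\<dots> = ennreal (c + 1) * emeasure \<nu> B0 + ennreal M * (\<integral>\<^sup>+ y. ennreal (F x1 y) \<partial>\<nu>)"
      using Fm[of x1] Bk_sets[of 0] unfolding B0_def
      by (simp add: nn_integral_add nn_integral_cmult nn_integral_cmult_indicator)
    also have "\<dots> < \<infinity>" using B0fin E1 by (simp add: ennreal_mult_less_top less_top)
    finally show "(\<integral>\<^sup>+ y. ennreal (norm (h y * indicator B0 y)) \<partial>\<nu>) < \<infinity>" .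
  qed
  define m0 where "m0 = measure \<nu> B0"
  define ck where "ck k = (1 / m0) * (\<integral>y\<in>Bk \<Omega> x0 k. f y \<partial>\<nu>)" for k
  have fk_eq: "fk \<nu> \<Omega> x0 f k x * h x = indicator (Bk \<Omega> x0 k) x *\<^sub>R (f x * h x) - ck k * (h x * indicator B0 x)" for k x
    unfolding fk_def ck_def B0_def m0_def by (simp add: algebra_simps)
  have int_k: "integrable \<nu> (\<lambda>x. fk \<nu> \<Omega> x0 f k x * h x)" for k
    unfolding fk_eq
    by (intro Bochner_Integration.integrable_diff integrable_mult_indicator[OF Bk_sets fh_int]
        integrable_mult_right hB0_int)
  have ck_bd: "\<bar>ck k\<bar> \<le> (1 / m0) * (\<integral>y. \<bar>f y\<bar> \<partial>\<nu>)" for k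
  proof -
    have m0: "m0 \<ge> 0" unfolding m0_def by simp
    have "\<bar>\<integral>y\<in>Bk \<Omega> x0 k. f y \<partial>\<nu>\<bar> = \<bar>\<integral>y. indicator (Bk \<Omega> x0 k) y *\<^sub>R f y \<partial>\<nu>\<bar>"
      by (simp add: set_lebesgue_integral_def)
    also have "\<dots> \<le> (\<integral>y. norm (indicator (Bk \<Omega> x0 k) y *\<^sub>R f y) \<partial>\<nu>)"
      using integral_norm_bound[of \<nu> "\<lambda>y. indicator (Bk \<Omega> x0 k) y *\<^sub>R f y"] by simp
    also have "\<dots> \<le> (\<integral>y. \<bar>f y\<bar> \<partial>\<nu>)"
      using f_int Bk_sets
      by (intro integral_mono integrable_norm integrable_abs integrable_mult_indicator)
         (auto split: split_indicator)
    finally have "\<bar>\<integral>y\<in>Bk \<Omega> x0 k. f y \<partial>\<nu>\<bar> \<le> (\<integral>y. \<bar>f y\<bar> \<partial>\<nu>)" .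
    then show ?thesis unfolding ck_def using m0 by (simp add: abs_mult divide_right_mono)
  qed
  define Bd where "Bd = (\<integral>y. \<bar>f y * h y\<bar> \<partial>\<nu>) + (1 / m0) * (\<integral>y. \<bar>f y\<bar> \<partial>\<nu>) * \<bar>\<integral>y. h y * indicator B0 y \<partial>\<nu>\<bar>"
  have bd: "\<bar>\<integral>x. fk \<nu> \<Omega> x0 f k x * h x \<partial>\<nu>\<bar> \<le> Bd" for k
  proof -
    have "(\<integral>x. fk \<nu> \<Omega> x0 f k x * h x \<partial>\<nu>) =
       (\<integral>x. indicator (Bk \<Omega> x0 k) x *\<^sub>R (f x * h x) \<partial>\<nu>) - ck k * (\<integral>x. h x * indicator B0 x \<partial>\<nu>)"
      unfolding fk_eq
      using integrable_mult_indicator[OF Bk_sets[of k] fh_int]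
      by (subst Bochner_Integration.integral_diff)
         (auto intro!: integrable_mult_right hB0_int)
    moreover have "\<bar>\<integral>x. indicator (Bk \<Omega> x0 k) x *\<^sub>R (f x * h x) \<partial>\<nu>\<bar> \<le> (\<integral>y. \<bar>f y * h y\<bar> \<partial>\<nu>)"
    proof -
      have "\<bar>\<integral>x. indicator (Bk \<Omega> x0 k) x *\<^sub>R (f x * h x) \<partial>\<nu>\<bar> \<le> (\<integral>x. norm (indicator (Bk \<Omega> x0 k) x *\<^sub>R (f x * h x)) \<partial>\<nu>)"
        using integral_norm_bound[of \<nu> "\<lambda>x. indicator (Bk \<Omega> x0 k) x *\<^sub>R (f x * h x)"] by simp
      also have "\<dots> \<le> (\<integral>y. \<bar>f y * h y\<bar> \<partial>\<nu>)"
        using fh_int Bk_sets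
        by (intro integral_mono integrable_norm integrable_abs integrable_mult_indicator)
           (auto split: split_indicator)
      finally show ?thesis .
    qed
    moreover have "\<bar>ck k * (\<integral>x. h x * indicator B0 x \<partial>\<nu>)\<bar> \<le> (1 / m0) * (\<integral>y. \<bar>f y\<bar> \<partial>\<nu>) * \<bar>\<integral>y. h y * indicator B0 y \<partial>\<nu>\<bar>"
    proof -
      have "\<bar>ck k\<bar> * \<bar>\<integral>x. h x * indicator B0 x \<partial>\<nu>\<bar> \<le> ((1 / m0) * (\<integral>y. \<bar>f y\<bar> \<partial>\<nu>)) * \<bar>\<integral>x. h x * indicator B0 x \<partial>\<nu>\<bar>"
        using ck_bd[of k] by (rule mult_right_mono) simp
      then show ?thesis by (simp only: abs_mult)
    qed
    ultimately show ?thesis unfolding Bd_def by (smt (verit))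
  qed
  show ?thesis
  proof
    show "\<forall>k. integrable \<nu> (\<lambda>x. fk \<nu> \<Omega> x0 f k x * h x)" using int_k by blast
    show "bdd_above (range (\<lambda>k. \<bar>\<integral>x. fk \<nu> \<Omega> x0 f k x * h x \<partial>\<nu>\<bar>))"
      by (rule bdd_aboveI2[of _ _ Bd]) (rule bd)
  qed
qed


end
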